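(* Identify $\mathbb{C}^4$ with $\mathbb{R}^8$. Let $\omega=e^{2\pi i/3}$, $\mathcal{E}=\mathbb{Z}[\omega]$, and $\theta=\omega-\bar\omega$. For a finite set $S\subset\mathbb{C}^4$ let $\langle S\rangle_{\mathcal E}$ denote the set of $\mathcal{E}$-linear combinations of elements of $S$. Define six sets of four vectors: $S_1=\{(\theta,0,0,0),(0,\theta,0,0),(0,0,\theta,0),(0,0,0,\theta)\}$; $S_2=\{(0,1,-1,1),(1,0,-1,-1),(1,-1,0,1),(1,1,1,0)\}$; $S_3=\{(0,1,-1,\omega),(1,0,-\omega,-\bar\omega),(1,-\omega,0,\bar\omega),(1,\omega,\omega,0)\}$; $S_4=\{(0,1,-\omega,\omega),(1,0,-\omega,-\omega),(1,-1,0,\omega),(1,1,\omega,0)\}$; $S_5=\{(0,1,-\omega,\bar\omega),(1,0,-\bar\omega,-1),(1,-\omega,0,1),(1,\omega,\bar\omega,0)\}$; $S_6=\{(0,1,-\omega,1),(1,0,-1,-\bar\omega),(1,-\bar\omega,0,\bar\omega),(1,\bar\omega,1,0)\}$; and for $j=3,4,5,6$ let $S_{j+4}=\overline{S_j}$ be obtained by complex-conjugating every coordinate. Let $\Lambda_k=\langle S_k\rangle_{\mathcal E}$ for $k=1,\dots,10$ (each a copy of $\mathcal{E}^4\cong A_2^4$). Then $$\Lambda_1\cap\cdots\cap\Lambda_{10}=\Lambda_1\cap\Lambda_2=\langle \theta(\theta,0,0,0),\ \theta(0,\theta,0,0),\ \theta(1,1,1,0),\ \theta(0,1,-1,1)\rangle_{\mathcal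 E},$$ and this lattice is a copy of the $E_8$ lattice.
   Context: $\mathcal{E}=\{a+b\omega:a,b\in\mathbb{Z}\}$ is the ring of Eisenstein integers; regarded as a real 2-dimensional lattice it is similar to the hexagonal lattice $A_2$. $E_8$ is the 8-dimensional root lattice (up to similarity). *)

theory Defs
  imports "HOL-Analysis.Analysis"
begin

definition omega :: complex where
  "omega = cis (2 * pi / 3)"

definition theta :: complex where
  "theta = omega - cnj omega"

definition eisenstein :: "complex set" where
  "eisenstein = {of_int a + of_int b * omega | a b. True}"

definition espan :: "(complex ^ 4) list \<Rightarrow> (complex ^ 4) set" where
  "espan S = {x. \<exists>c :: nat \<Rightarrow> complex. (\<forall>i<length S. c i \<in> eisenstein) \<and>
                 x = (\<Sum>i<length S. c i *s (S ! i))}"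

definition vconj :: "complex ^ 4 \<Rightarrow> complex ^ 4" where
  "vconj v = (\<chi> i. cnj (v $ i))"

definition S1 :: "(complex ^ 4) list" where
  "S1 = [vector [theta,0,0,0], vector [0,theta,0,0], vector [0,0,theta,0], vector [0,0,0,theta]]"
definition S2 :: "(complex ^ 4) list" where
  "S2 = [vector [0,1,-1,1], vector [1,0,-1,-1], vector [1,-1,0,1], vector [1,1,1,0]]"
definition S3 :: "(complex ^ 4) list" where
  "S3 = [vector [0,1,-1,omega], vector [1,0,-omega,-cnj omega], vector [1,-omega,0,cnj omega],
         vector [1,omega,omega,0]]"
definition S4 :: "(complex ^ 4) list" where
  "S4 = [vector [0,1,-omega,omega], vector [1,0,-omega,-omega], vector [1,-1,0,omega],
         vector [1,1,omega,0]]"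
definition S5 :: "(complex ^ 4) list" where
  "S5 = [vector [0,1,-omega,cnj omega], vector [1,0,-cnj omega,-1], vector [1,-omega,0,1],
         vector [1,omega,cnj omega,0]]"
definition S6 :: "(complex ^ 4) list" where
  "S6 = [vector [0,1,-omega,1], vector [1,0,-1,-cnj omega], vector [1,-cnj omega,0,cnj omega],
         vector [1,cnj omega,1,0]]"

definition Sset :: "nat \<Rightarrow> (complex ^ 4) list" where
  "Sset k = (if k = 1 then S1 else if k = 2 then S2 else if k = 3 then S3
             else if k = 4 then S4 else if k = 5 then S5 else if k = 6 then S6
             else if k = 7 then map vconj S3 else if k = 8 then map vconj S4
             else if k = 9 then map vconj S5 else if k = 10 then map vconj S6 else [])"

definition Lam :: "nat \<Rightarrow> (complex ^ 4) set" where
  "Lam k = espan (Sset k)"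

definition E8 :: "(real ^ 8) set" where
  "E8 = {x. ((\<forall>i. x $ i \<in> \<int>) \<or> (\<forall>i. x $ i - 1/2 \<in> \<int>)) \<and>
            (\<exists>k::int. (\<Sum>i\<in>UNIV. x $ i) = 2 * of_int k)}"

text \<open>C^4 is regarded as the real 8-dimensional Euclidean space (its real inner product
  is Re of the Hermitian product). L is a copy of E8: a real-linear similarity maps L onto E8.\<close>
definition is_E8_copy :: "(complex ^ 4) set \<Rightarrow> bool" where
  "is_E8_copy L \<longleftrightarrow> (\<exists>(f :: complex ^ 4 \<Rightarrow> real ^ 8) (c::real). linear f \<and> c > 0 \<and>
      (\<forall>x y. inner (f x) (f y) = c * inner x y) \<and> f ` L = E8)"

end

theory Submission
  imports Defs
begin


lemma vector4_nth [simp]: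
  "(vector [a,b,c,d] :: 'a::zero^4) $ 1 = a"
  "(vector [a,b,c,d] :: 'a::zero^4) $ 2 = b"
  "(vector [a,b,c,d] :: 'a::zero^4) $ 3 = c"
  "(vector [a,b,c,d] :: 'a::zero^4) $ 4 = d"
  unfolding vector_def by simp_all

lemma exhaust_8:
  fixes x :: 8
  shows "x = 1 \<or> x = 2 \<or> x = 3 \<or> x = 4 \<or> x = 5 \<or> x = 6 \<or> x = 7 \<or> x = 8"
proof (induct x)
  case (of_int z)
  then have "z = 0 \<or> z = 1 \<or> z = 2 \<or> z = 3 \<or> z = 4 \<or> z = 5 \<or> z = 6 \<or> z = 7" by fastforce
  then show ?case by auto
qed

lemma forall_8: "(\<forall>i::8. P i) \<longleftrightarrow> P 1 \<and> P 2 \<and> P 3 \<and> P 4 \<and> P 5 \<and> P 6 \<and> P 7 \<and> P 8"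
  by (metis exhaust_8)

lemma UNIV_8: "UNIV = {1, 2, 3, 4, 5, 6, 7, 8::8}"
  using exhaust_8 by auto

lemma sum_8: "sum f (UNIV::8 set) = f 1 + f 2 + f 3 + f 4 + f 5 + f 6 + f 7 + f 8"
  unfolding UNIV_8 by (simp add: ac_simps)

lemma vector8_nth [simp]:
  "(vector [a1,a2,a3,a4,a5,a6,a7,a8] :: 'a::zero^8) $ 1 = a1"
  "(vector [a1,a2,a3,a4,a5,a6,a7,a8] :: 'a::zero^8) $ 2 = a2"
  "(vector [a1,a2,a3,a4,a5,a6,a7,a8] :: 'a::zero^8) $ 3 = a3"
  "(vector [a1,a2,a3,a4,a5,a6,a7,a8] :: 'a::zero^8) $ 4 = a4"
  "(vector [a1,a2,a3,a4,a5,a6,a7,a8] :: 'a::zero^8) $ 5 = a5"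
  "(vector [a1,a2,a3,a4,a5,a6,a7,a8] :: 'a::zero^8) $ 6 = a6"
  "(vector [a1,a2,a3,a4,a5,a6,a7,a8] :: 'a::zero^8) $ 7 = a7"
  "(vector [a1,a2,a3,a4,a5,a6,a7,a8] :: 'a::zero^8) $ 8 = a8"
  unfolding vector_def by simp_all

lemma omega_Re [simp]: "Re omega = -1/2" and omega_Im [simp]: "Im omega = sqrt 3 / 2"
  by (simp_all add: omega_def cos_120 sin_120)

lemma omega_sq: "omega * omega = -1 - omega"
  by (simp add: complex_eq_iff algebra_simps)

lemma omega_sq2: "omega * (omega * z) = - z - omega * z"
  using omega_sq by (metis (no_types, lifting) mult.assoc mult_minus_left left_diff_distrib mult_1)

lemma cnj_omega: "cnj omega = -1 - omega"
  by (simp add: complex_eq_iff)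

lemma theta_eq: "theta = 1 + 2 * omega"
  by (simp add: theta_def cnj_omega)


lemma eis_intro: "of_int a + of_int b * omega \<in> eisenstein"
  unfolding eisenstein_def by blast

lemma eisE: assumes "z \<in> eisenstein" obtains a b where "z = of_int a + of_int b * omega"
  using assms unfolding eisenstein_def by blast

lemma eis_add [simp]: "x \<in> eisenstein \<Longrightarrow> y \<in> eisenstein \<Longrightarrow> x + y \<in> eisenstein"
proof -
  assume "x \<in> eisenstein" "y \<in> eisenstein"
  then obtain a b c d where "x = of_int a + of_int b * omega" "y = of_int c + of_int d * omega"
    by (metis eisE)
  then have eq: "x + y = of_int (a + c) + of_int (b + d) * omega" by (simp add: algebra_simps)
  show ?thesis unfolding eq by (rule eis_intro)
qed

lemma eis_mult [simp]: "x \<in> eisenstein \<Longrightarrow> y \<in> eisenstein \<Longrightarrow> x * y \<in> eisenstein"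
proof -
  assume "x \<in> eisenstein" "y \<in> eisenstein"
  then obtain a b c d where xy: "x = of_int a + of_int b * omega" "y = of_int c + of_int d * omega"
    by (metis eisE)
  have "x * y = of_int a * of_int c - of_int b * of_int d + (of_int a * of_int d + of_int b * of_int c - of_int b * of_int d) * omega"
    unfolding xy using omega_sq by algebra
  then have eq: "x * y = of_int (a*c - b*d) + of_int (a*d + b*c - b*d) * omega" by simp
  show ?thesis unfolding eq by (rule eis_intro)
qed

lemma eis_uminus [simp]: "x \<in> eisenstein \<Longrightarrow> - x \<in> eisenstein"
proof -
  assume "x \<in> eisenstein"
  then obtain a b where "x = of_int a + of_int b * omega" by (metis eisE)
  then have eq: "- x = of_int (- a) + of_int (- b) * omega" by simp
  show ?thesis unfolding eq by (rule eis_intro)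
qed

lemma eis_diff [simp]: "x \<in> eisenstein \<Longrightarrow> y \<in> eisenstein \<Longrightarrow> x - y \<in> eisenstein"
  using eis_add[of x "- y"] by simp

lemma eis_of_int [simp]: "of_int a \<in> eisenstein"
  using eis_intro[of a 0] by simp

lemma eis_0 [simp]: "0 \<in> eisenstein" using eis_of_int[of 0] by simp
lemma eis_1 [simp]: "1 \<in> eisenstein" using eis_of_int[of 1] by simp
lemma eis_numeral [simp]: "numeral n \<in> eisenstein" using eis_of_int[of "numeral n"] by simp
lemma eis_omega [simp]: "omega \<in> eisenstein" using eis_intro[of 0 1] by simp
lemma eis_theta [simp]: "theta \<in> eisenstein" by (simp add: theta_eq)

lemma eis_sum: "(\<And>i. i \<in> A \<Longrightarrow> f i \<in> eisenstein) \<Longrightarrow> sum f A \<in> eisenstein"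
  by (induct A rule: infinite_finite_induct) auto

lemma sum4_nat: "(\<Sum>i<4::nat. h i) = h 0 + h 1 + h 2 + h 3"
  by (simp add: eval_nat_numeral)

lemma all4_nat: "(\<forall>i<4::nat. P i) \<longleftrightarrow> P 0 \<and> P 1 \<and> P 2 \<and> P 3"
  by (auto simp: eval_nat_numeral less_Suc_eq)

lemma espan4: "espan [a,b,c,d] = {c1 *s a + c2 *s b + c3 *s c + c4 *s d | c1 c2 c3 c4.
   c1 \<in> eisenstein \<and> c2 \<in> eisenstein \<and> c3 \<in> eisenstein \<and> c4 \<in> eisenstein}"
proof (rule set_eqI, rule iffI)
  fix x assume "x \<in> espan [a,b,c,d]"
  then obtain e where e: "\<forall>i<length [a,b,c,d]. e i \<in> eisenstein" "x = (\<Sum>i<length [a,b,c,d]. e i *s ([a,b,c,d] ! i))"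
    unfolding espan_def by blast
  have len: "length [a,b,c,d] = 4" by simp
  have "x = e 0 *s a + e 1 *s b + e 2 *s c + e 3 *s d" using e(2) unfolding len sum4_nat by simp
  moreover have "e 0 \<in> eisenstein \<and> e 1 \<in> eisenstein \<and> e 2 \<in> eisenstein \<and> e 3 \<in> eisenstein"
    using e(1) unfolding len all4_nat by simp
  ultimately show "x \<in> {c1 *s a + c2 *s b + c3 *s c + c4 *s d | c1 c2 c3 c4.
   c1 \<in> eisenstein \<and> c2 \<in> eisenstein \<and> c3 \<in> eisenstein \<and> c4 \<in> eisenstein}"
    by blast
next
  fix x assume "x \<in> {c1 *s a + c2 *s b + c3 *s c + c4 *s d | c1 c2 c3 c4.
   c1 \<in> eisenstein \<and> c2 \<in> eisenstein \<and> c3 \<in> eisenstein \<and> c4 \<in> eisenstein}"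
  then obtain c1 c2 c3 c4 where h: "c1 \<in> eisenstein" "c2 \<in> eisenstein" "c3 \<in> eisenstein" "c4 \<in> eisenstein"
     "x = c1 *s a + c2 *s b + c3 *s c + c4 *s d" by blast
  define e where "e = (\<lambda>i::nat. if i = 0 then c1 else if i = 1 then c2 else if i = 2 then c3 else c4)"
  have "\<forall>i<length [a,b,c,d]. e i \<in> eisenstein" using h by (simp add: all4_nat e_def)
  moreover have "x = (\<Sum>i<length [a,b,c,d]. e i *s ([a,b,c,d] ! i))"
    using h by (simp add: sum4_nat e_def)
  ultimately show "x \<in> espan [a,b,c,d]" unfolding espan_def by blast
qed

lemma espan4I: "ca \<in> eisenstein \<Longrightarrow> cb \<in> eisenstein \<Longrightarrow> cc \<in> eisenstein \<Longrightarrow> cd \<in> eisenstein \<Longrightarrow>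
   v = ca *s a + cb *s b + cc *s c + cd *s d \<Longrightarrow> v \<in> espan [a,b,c,d]"
  unfolding espan4 by blast

lemma espan_subset:
  assumes "\<forall>v\<in>set T. v \<in> espan S"
  shows "espan T \<subseteq> espan S"
proof
  fix x assume "x \<in> espan T"
  then obtain c where c: "\<forall>i<length T. c i \<in> eisenstein" "x = (\<Sum>i<length T. c i *s (T ! i))"
    unfolding espan_def by auto
  have "\<forall>i. \<exists>e. i < length T \<longrightarrow> (\<forall>j<length S. e j \<in> eisenstein) \<and> T ! i = (\<Sum>j<length S. e j *s (S ! j))"
  proof
    fix i show "\<exists>e. i < length T \<longrightarrow> (\<forall>j<length S. e j \<in> eisenstein) \<and> T ! i = (\<Sum>j<length S. e j *s (S ! j))"
    proof (cases "i < length T")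
      case True
      then have "T ! i \<in> espan S" using assms nth_mem by blast
      then show ?thesis unfolding espan_def by blast
    qed simp
  qed
  then obtain e where e0: "\<forall>i. i < length T \<longrightarrow> (\<forall>j<length S. e i j \<in> eisenstein) \<and> T ! i = (\<Sum>j<length S. e i j *s (S ! j))"
    by (rule choice[THEN exE])
  then have e: "\<And>i. i < length T \<Longrightarrow> (\<forall>j<length S. e i j \<in> eisenstein) \<and> T ! i = (\<Sum>j<length S. e i j *s (S ! j))"
    by blast
  define d where "d = (\<lambda>j. \<Sum>i<length T. c i * e i j)"
  have "\<forall>j<length S. d j \<in> eisenstein"
    unfolding d_def using c e by (auto intro!: eis_sum)
  moreover have "x = (\<Sum>j<length S. d j *s (S ! j))"
  proof -
    have "x = (\<Sum>i<length T. c i *s (\<Sum>j<length S. e i j *s (S ! j)))"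
      using c e by simp
    also have "\<dots> = (\<Sum>j<length S. d j *s (S ! j))"
      unfolding d_def
      by (simp add: vec_eq_iff sum_component sum_distrib_left sum_distrib_right mult.assoc sum.swap[of _ "{..<length T}"])
    finally show ?thesis .
  qed
  ultimately show "x \<in> espan S" unfolding espan_def by blast
qed

lemma vconj4: "vconj (vector [a,b,c,d]) = vector [cnj a, cnj b, cnj c, cnj d]"
  by (simp add: vconj_def vec_eq_iff forall_4)

definition Gl :: "(complex^4) list" where
  "Gl = [theta *s vector [theta,0,0,0], theta *s vector [0,theta,0,0],
         theta *s vector [1,1,1,0], theta *s vector [0,1,-1,1]]"

lemma mem_1_1: "theta *s vector [theta,0,0,0] \<in> espan S1"
  unfolding S1_def list.map vconj4
  by (rule espan4I[where ca="1 + 2 * omega" and cb="0" and cc="0" and cd="0"])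
    (simp_all add: vec_eq_iff forall_4 cnj_omega theta_eq algebra_simps omega_sq omega_sq2)

lemma mem_1_2: "theta *s vector [0,theta,0,0] \<in> espan S1"
  unfolding S1_def list.map vconj4
  by (rule espan4I[where ca="0" and cb="1 + 2 * omega" and cc="0" and cd="0"])
    (simp_all add: vec_eq_iff forall_4 cnj_omega theta_eq algebra_simps omega_sq omega_sq2)

lemma mem_1_3: "theta *s vector [1,1,1,0] \<in> espan S1"
  unfolding S1_def list.map vconj4
  by (rule espan4I[where ca="1" and cb="1" and cc="1" and cd="0"])
    (simp_all add: vec_eq_iff forall_4 cnj_omega theta_eq algebra_simps omega_sq omega_sq2)

lemma mem_1_4: "theta *s vector [0,1,-1,1] \<in> espan S1"
  unfolding S1_def list.map vconj4
  by (rule espan4I[where ca="0" and cb="1" and cc="(-1)" and cd="1"])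
    (simp_all add: vec_eq_iff forall_4 cnj_omega theta_eq algebra_simps omega_sq omega_sq2)

lemma memall_1: "\<forall>v\<in>set Gl. v \<in> Lam 1"
  unfolding Gl_def Lam_def Sset_def using mem_1_1 mem_1_2 mem_1_3 mem_1_4 by simp

lemma mem_2_1: "theta *s vector [theta,0,0,0] \<in> espan S2"
  unfolding S2_def list.map vconj4
  by (rule espan4I[where ca="0" and cb="(-1)" and cc="(-1)" and cd="(-1)"])
    (simp_all add: vec_eq_iff forall_4 cnj_omega theta_eq algebra_simps omega_sq omega_sq2)

lemma mem_2_2: "theta *s vector [0,theta,0,0] \<in> espan S2"
  unfolding S2_def list.map vconj4
  by (rule espan4I[where ca="(-1)" and cb="0" and cc="1" and cd="(-1)"])
    (simp_all add: vec_eq_iff forall_4 cnj_omega theta_eq algebra_simps omega_sq omega_sq2)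

lemma mem_2_3: "theta *s vector [1,1,1,0] \<in> espan S2"
  unfolding S2_def list.map vconj4
  by (rule espan4I[where ca="0" and cb="0" and cc="0" and cd="1 + 2 * omega"])
    (simp_all add: vec_eq_iff forall_4 cnj_omega theta_eq algebra_simps omega_sq omega_sq2)

lemma mem_2_4: "theta *s vector [0,1,-1,1] \<in> espan S2"
  unfolding S2_def list.map vconj4
  by (rule espan4I[where ca="1 + 2 * omega" and cb="0" and cc="0" and cd="0"])
    (simp_all add: vec_eq_iff forall_4 cnj_omega theta_eq algebra_simps omega_sq omega_sq2)

lemma memall_2: "\<forall>v\<in>set Gl. v \<in> Lam 2"
  unfolding Gl_def Lam_def Sset_def using mem_2_1 mem_2_2 mem_2_3 mem_2_4 by simp

lemma mem_3_1: "theta *s vector [theta,0,0,0] \<in> espan S3"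
  unfolding S3_def list.map vconj4
  by (rule espan4I[where ca="0" and cb="(-1)" and cc="(-1)" and cd="(-1)"])
    (simp_all add: vec_eq_iff forall_4 cnj_omega theta_eq algebra_simps omega_sq omega_sq2)

lemma mem_3_2: "theta *s vector [0,theta,0,0] \<in> espan S3"
  unfolding S3_def list.map vconj4
  by (rule espan4I[where ca="(-1)" and cb="0" and cc="-1 - omega" and cd="1 + omega"])
    (simp_all add: vec_eq_iff forall_4 cnj_omega theta_eq algebra_simps omega_sq omega_sq2)

lemma mem_3_3: "theta *s vector [1,1,1,0] \<in> espan S3"
  unfolding S3_def list.map vconj4
  by (rule espan4I[where ca="0" and cb="omega" and cc="omega" and cd="1"])
    (simp_all add: vec_eq_iff forall_4 cnj_omega theta_eq algebra_simps omega_sq omega_sq2)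

lemma mem_3_4: "theta *s vector [0,1,-1,1] \<in> espan S3"
  unfolding S3_def list.map vconj4
  by (rule espan4I[where ca="1 + omega" and cb="1" and cc="(-1)" and cd="0"])
    (simp_all add: vec_eq_iff forall_4 cnj_omega theta_eq algebra_simps omega_sq omega_sq2)

lemma memall_3: "\<forall>v\<in>set Gl. v \<in> Lam 3"
  unfolding Gl_def Lam_def Sset_def using mem_3_1 mem_3_2 mem_3_3 mem_3_4 by simp

lemma mem_4_1: "theta *s vector [theta,0,0,0] \<in> espan S4"
  unfolding S4_def list.map vconj4
  by (rule espan4I[where ca="0" and cb="(-1)" and cc="(-1)" and cd="(-1)"])
    (simp_all add: vec_eq_iff forall_4 cnj_omega theta_eq algebra_simps omega_sq omega_sq2)

lemma mem_4_2: "theta *s vector [0,theta,0,0] \<in> espan S4"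
  unfolding S4_def list.map vconj4
  by (rule espan4I[where ca="(-1)" and cb="0" and cc="1" and cd="(-1)"])
    (simp_all add: vec_eq_iff forall_4 cnj_omega theta_eq algebra_simps omega_sq omega_sq2)

lemma mem_4_3: "theta *s vector [1,1,1,0] \<in> espan S4"
  unfolding S4_def list.map vconj4
  by (rule espan4I[where ca="omega" and cb="omega" and cc="0" and cd="1 + omega"])
    (simp_all add: vec_eq_iff forall_4 cnj_omega theta_eq algebra_simps omega_sq omega_sq2)

lemma mem_4_4: "theta *s vector [0,1,-1,1] \<in> espan S4"
  unfolding S4_def list.map vconj4
  by (rule espan4I[where ca="1" and cb="0" and cc="(- omega)" and cd="omega"])
    (simp_all add: vec_eq_iff forall_4 cnj_omega theta_eq algebra_simps omega_sq omega_sq2)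

lemma memall_4: "\<forall>v\<in>set Gl. v \<in> Lam 4"
  unfolding Gl_def Lam_def Sset_def using mem_4_1 mem_4_2 mem_4_3 mem_4_4 by simp

lemma mem_5_1: "theta *s vector [theta,0,0,0] \<in> espan S5"
  unfolding S5_def list.map vconj4
  by (rule espan4I[where ca="0" and cb="(-1)" and cc="(-1)" and cd="(-1)"])
    (simp_all add: vec_eq_iff forall_4 cnj_omega theta_eq algebra_simps omega_sq omega_sq2)

lemma mem_5_2: "theta *s vector [0,theta,0,0] \<in> espan S5"
  unfolding S5_def list.map vconj4
  by (rule espan4I[where ca="(-1)" and cb="0" and cc="-1 - omega" and cd="1 + omega"])
    (simp_all add: vec_eq_iff forall_4 cnj_omega theta_eq algebra_simps omega_sq omega_sq2)

lemma mem_5_3: "theta *s vector [1,1,1,0] \<in> espan S5"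
  unfolding S5_def list.map vconj4
  by (rule espan4I[where ca="omega" and cb="1 + omega" and cc="omega" and cd="0"])
    (simp_all add: vec_eq_iff forall_4 cnj_omega theta_eq algebra_simps omega_sq omega_sq2)

lemma mem_5_4: "theta *s vector [0,1,-1,1] \<in> espan S5"
  unfolding S5_def list.map vconj4
  by (rule espan4I[where ca="0" and cb="-1 - omega" and cc="omega" and cd="1"])
    (simp_all add: vec_eq_iff forall_4 cnj_omega theta_eq algebra_simps omega_sq omega_sq2)

lemma memall_5: "\<forall>v\<in>set Gl. v \<in> Lam 5"
  unfolding Gl_def Lam_def Sset_def using mem_5_1 mem_5_2 mem_5_3 mem_5_4 by simp

lemma mem_6_1: "theta *s vector [theta,0,0,0] \<in> espan S6"
  unfolding S6_def list.map vconj4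
  by (rule espan4I[where ca="0" and cb="(-1)" and cc="(-1)" and cd="(-1)"])
    (simp_all add: vec_eq_iff forall_4 cnj_omega theta_eq algebra_simps omega_sq omega_sq2)

lemma mem_6_2: "theta *s vector [0,theta,0,0] \<in> espan S6"
  unfolding S6_def list.map vconj4
  by (rule espan4I[where ca="(-1)" and cb="0" and cc="omega" and cd="(- omega)"])
    (simp_all add: vec_eq_iff forall_4 cnj_omega theta_eq algebra_simps omega_sq omega_sq2)

lemma mem_6_3: "theta *s vector [1,1,1,0] \<in> espan S6"
  unfolding S6_def list.map vconj4
  by (rule espan4I[where ca="omega" and cb="0" and cc="1 + omega" and cd="omega"])
    (simp_all add: vec_eq_iff forall_4 cnj_omega theta_eq algebra_simps omega_sq omega_sq2)

lemma mem_6_4: "theta *s vector [0,1,-1,1] \<in> espan S6"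
  unfolding S6_def list.map vconj4
  by (rule espan4I[where ca="1 + omega" and cb="1 + omega" and cc="0" and cd="-1 - omega"])
    (simp_all add: vec_eq_iff forall_4 cnj_omega theta_eq algebra_simps omega_sq omega_sq2)

lemma memall_6: "\<forall>v\<in>set Gl. v \<in> Lam 6"
  unfolding Gl_def Lam_def Sset_def using mem_6_1 mem_6_2 mem_6_3 mem_6_4 by simp

lemma mem_7_1: "theta *s vector [theta,0,0,0] \<in> espan (map vconj S3)"
  unfolding S3_def list.map vconj4
  by (rule espan4I[where ca="0" and cb="(-1)" and cc="(-1)" and cd="(-1)"])
    (simp_all add: vec_eq_iff forall_4 cnj_omega theta_eq algebra_simps omega_sq omega_sq2)

lemma mem_7_2: "theta *s vector [0,theta,0,0] \<in> espan (map vconj S3)"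
  unfolding S3_def list.map vconj4
  by (rule espan4I[where ca="(-1)" and cb="0" and cc="omega" and cd="(- omega)"])
    (simp_all add: vec_eq_iff forall_4 cnj_omega theta_eq algebra_simps omega_sq omega_sq2)

lemma mem_7_3: "theta *s vector [1,1,1,0] \<in> espan (map vconj S3)"
  unfolding S3_def list.map vconj4
  by (rule espan4I[where ca="0" and cb="1 + omega" and cc="1 + omega" and cd="(-1)"])
    (simp_all add: vec_eq_iff forall_4 cnj_omega theta_eq algebra_simps omega_sq omega_sq2)

lemma mem_7_4: "theta *s vector [0,1,-1,1] \<in> espan (map vconj S3)"
  unfolding S3_def list.map vconj4
  by (rule espan4I[where ca="omega" and cb="(-1)" and cc="1" and cd="0"])
    (simp_all add: vec_eq_iff forall_4 cnj_omega theta_eq algebra_simps omega_sq omega_sq2)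

lemma memall_7: "\<forall>v\<in>set Gl. v \<in> Lam 7"
  unfolding Gl_def Lam_def Sset_def using mem_7_1 mem_7_2 mem_7_3 mem_7_4 by simp

lemma mem_8_1: "theta *s vector [theta,0,0,0] \<in> espan (map vconj S4)"
  unfolding S4_def list.map vconj4
  by (rule espan4I[where ca="0" and cb="(-1)" and cc="(-1)" and cd="(-1)"])
    (simp_all add: vec_eq_iff forall_4 cnj_omega theta_eq algebra_simps omega_sq omega_sq2)

lemma mem_8_2: "theta *s vector [0,theta,0,0] \<in> espan (map vconj S4)"
  unfolding S4_def list.map vconj4
  by (rule espan4I[where ca="(-1)" and cb="0" and cc="1" and cd="(-1)"])
    (simp_all add: vec_eq_iff forall_4 cnj_omega theta_eq algebra_simps omega_sq omega_sq2)

lemma mem_8_3: "theta *s vector [1,1,1,0] \<in> espan (map vconj S4)"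
  unfolding S4_def list.map vconj4
  by (rule espan4I[where ca="1 + omega" and cb="1 + omega" and cc="0" and cd="omega"])
    (simp_all add: vec_eq_iff forall_4 cnj_omega theta_eq algebra_simps omega_sq omega_sq2)

lemma mem_8_4: "theta *s vector [0,1,-1,1] \<in> espan (map vconj S4)"
  unfolding S4_def list.map vconj4
  by (rule espan4I[where ca="(-1)" and cb="0" and cc="-1 - omega" and cd="1 + omega"])
    (simp_all add: vec_eq_iff forall_4 cnj_omega theta_eq algebra_simps omega_sq omega_sq2)

lemma memall_8: "\<forall>v\<in>set Gl. v \<in> Lam 8"
  unfolding Gl_def Lam_def Sset_def using mem_8_1 mem_8_2 mem_8_3 mem_8_4 by simp

lemma mem_9_1: "theta *s vector [theta,0,0,0] \<in> espan (map vconj S5)"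
  unfolding S5_def list.map vconj4
  by (rule espan4I[where ca="0" and cb="(-1)" and cc="(-1)" and cd="(-1)"])
    (simp_all add: vec_eq_iff forall_4 cnj_omega theta_eq algebra_simps omega_sq omega_sq2)

lemma mem_9_2: "theta *s vector [0,theta,0,0] \<in> espan (map vconj S5)"
  unfolding S5_def list.map vconj4
  by (rule espan4I[where ca="(-1)" and cb="0" and cc="omega" and cd="(- omega)"])
    (simp_all add: vec_eq_iff forall_4 cnj_omega theta_eq algebra_simps omega_sq omega_sq2)

lemma mem_9_3: "theta *s vector [1,1,1,0] \<in> espan (map vconj S5)"
  unfolding S5_def list.map vconj4
  by (rule espan4I[where ca="1 + omega" and cb="omega" and cc="1 + omega" and cd="0"])
    (simp_all add: vec_eq_iff forall_4 cnj_omega theta_eq algebra_simps omega_sq omega_sq2)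

lemma mem_9_4: "theta *s vector [0,1,-1,1] \<in> espan (map vconj S5)"
  unfolding S5_def list.map vconj4
  by (rule espan4I[where ca="0" and cb="(- omega)" and cc="1 + omega" and cd="(-1)"])
    (simp_all add: vec_eq_iff forall_4 cnj_omega theta_eq algebra_simps omega_sq omega_sq2)

lemma memall_9: "\<forall>v\<in>set Gl. v \<in> Lam 9"
  unfolding Gl_def Lam_def Sset_def using mem_9_1 mem_9_2 mem_9_3 mem_9_4 by simp

lemma mem_10_1: "theta *s vector [theta,0,0,0] \<in> espan (map vconj S6)"
  unfolding S6_def list.map vconj4
  by (rule espan4I[where ca="0" and cb="(-1)" and cc="(-1)" and cd="(-1)"])
    (simp_all add: vec_eq_iff forall_4 cnj_omega theta_eq algebra_simps omega_sq omega_sq2)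

lemma mem_10_2: "theta *s vector [0,theta,0,0] \<in> espan (map vconj S6)"
  unfolding S6_def list.map vconj4
  by (rule espan4I[where ca="(-1)" and cb="0" and cc="-1 - omega" and cd="1 + omega"])
    (simp_all add: vec_eq_iff forall_4 cnj_omega theta_eq algebra_simps omega_sq omega_sq2)

lemma mem_10_3: "theta *s vector [1,1,1,0] \<in> espan (map vconj S6)"
  unfolding S6_def list.map vconj4
  by (rule espan4I[where ca="1 + omega" and cb="0" and cc="omega" and cd="1 + omega"])
    (simp_all add: vec_eq_iff forall_4 cnj_omega theta_eq algebra_simps omega_sq omega_sq2)

lemma mem_10_4: "theta *s vector [0,1,-1,1] \<in> espan (map vconj S6)"
  unfolding S6_def list.map vconj4
  by (rule espan4I[where ca="omega" and cb="omega" and cc="0" and cd="(- omega)"])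
    (simp_all add: vec_eq_iff forall_4 cnj_omega theta_eq algebra_simps omega_sq omega_sq2)

lemma memall_10: "\<forall>v\<in>set Gl. v \<in> Lam 10"
  unfolding Gl_def Lam_def Sset_def using mem_10_1 mem_10_2 mem_10_3 mem_10_4 by simp

lemma theta_sq: "theta * theta = -3"
  unfolding theta_eq using omega_sq by algebra

lemma inter_sub: "Lam 1 \<inter> Lam 2 \<subseteq> espan Gl"
proof
  fix x assume "x \<in> Lam 1 \<inter> Lam 2"
  then have x1: "x \<in> espan S1" and x2: "x \<in> espan S2" by (simp_all add: Lam_def Sset_def)
  from x1 obtain e1 e2 e3 e4 where E: "e1 \<in> eisenstein" "e2 \<in> eisenstein" "e3 \<in> eisenstein" "e4 \<in> eisenstein"
    and xe: "x = e1 *s vector [theta,0,0,0] + e2 *s vector [0,theta,0,0] + e3 *s vector [0,0,theta,0] + e4 *s vector [0,0,0,theta]"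
    unfolding S1_def espan4 by blast
  from x2 obtain c1 c2 c3 c4 where C: "c1 \<in> eisenstein" "c2 \<in> eisenstein" "c3 \<in> eisenstein" "c4 \<in> eisenstein"
    and xc: "x = c1 *s vector [0,1,-1,1] + c2 *s vector [1,0,-1,-1] + c3 *s vector [1,-1,0,1] + c4 *s vector [1,1,1,0]"
    unfolding S2_def espan4 by blast
  have h1: "e1 * theta = c2 + c3 + c4" using arg_cong[OF xe[symmetric, unfolded xc], of "\<lambda>v. v $ 1"] by simp
  have h2: "e2 * theta = c1 - c3 + c4" using arg_cong[OF xe[symmetric, unfolded xc], of "\<lambda>v. v $ 2"] by simp
  have h3: "e3 * theta = - c1 - c2 + c4" using arg_cong[OF xe[symmetric, unfolded xc], of "\<lambda>v. v $ 3"] by simp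
  have h4: "e4 * theta = c1 - c2 + c3" using arg_cong[OF xe[symmetric, unfolded xc], of "\<lambda>v. v $ 4"] by simp
  show "x \<in> espan Gl"
    unfolding Gl_def
  proof (rule espan4I[where ca="- c2" and cb="- c1 + theta * e4" and cc="e3 + e4" and cd="e4"])
    show "x = (- c2) *s (theta *s vector [theta, 0, 0, 0]) + (- c1 + theta * e4) *s (theta *s vector [0, theta, 0, 0]) +
      (e3 + e4) *s (theta *s vector [1, 1, 1, 0]) + e4 *s (theta *s vector [0, 1, - 1, 1])"
      unfolding xe
      apply (simp add: vec_eq_iff forall_4)
      apply (intro conjI)
      using h1 h2 h3 h4 theta_sq by algebra+
  qed (use E C in simp_all)
qed



definition cu :: "complex \<Rightarrow> real" where "cu z = Re z + Im z / sqrt 3"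
definition cv :: "complex \<Rightarrow> real" where "cv z = 2 * Im z / sqrt 3"

lemma cuv_eis [simp]: "cu (of_int a + of_int b * omega) = of_int a" "cv (of_int a + of_int b * omega) = of_int b"
  by (simp_all add: cu_def cv_def field_simps)

lemma inner_cuv: "inner z w = cu z * cu w + cv z * cv w - (cu z * cv w + cv z * cu w) / 2"
proof -
  have s: "sqrt 3 * sqrt 3 = (3::real)" by simp
  show ?thesis unfolding cu_def cv_def inner_complex_def
    by (simp add: field_simps s)
qed

lemma cu_add: "cu (z + w) = cu z + cu w" and cv_add: "cv (z + w) = cv z + cv w"
  by (simp_all add: cu_def cv_def field_simps)
lemma cu_scale: "cu (r *\<^sub>R z) = r * cu z" and cv_scale: "cv (r *\<^sub>R z) = r * cv z"
  by (simp_all add: cu_def cv_def field_simps)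

definition PP1 :: "real^8" where "PP1 = vector [1/3, (-1/3), 0, 0, 0, 0, 0, 0]"
definition QQ1 :: "real^8" where "QQ1 = vector [0, 1/3, 0, 0, (-1/3), 0, 0, 0]"
definition PP2 :: "real^8" where "PP2 = vector [0, 0, (-1/3), 0, 0, (-1/3), 0, 0]"
definition QQ2 :: "real^8" where "QQ2 = vector [0, 0, 1/3, (-1/3), 0, 0, 0, 0]"
definition PP3 :: "real^8" where "PP3 = vector [1/6, 1/6, 1/6, 1/6, 1/6, (-1/6), 1/6, (-1/6)]"
definition QQ3 :: "real^8" where "QQ3 = vector [0, 0, 0, 0, 0, 0, (-1/3), 1/3]"
definition PP4 :: "real^8" where "PP4 = vector [1/6, 1/6, (-1/6), (-1/6), 1/6, 1/6, (-1/6), (-1/6)]"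
definition QQ4 :: "real^8" where "QQ4 = vector [0, 0, 0, 0, 0, 0, 1/3, 1/3]"
definition WW1 :: "real^8" where "WW1 = vector [(-1), 1, 0, 0, 0, 0, 0, 0]"
definition WW2 :: "real^8" where "WW2 = vector [0, 0, 1, 0, 0, 1, 0, 0]"
definition WW3 :: "real^8" where "WW3 = vector [1/2, 1/2, 1/2, (-1/2), (-1/2), (-1/2), (-1/2), 1/2]"
definition WW4 :: "real^8" where "WW4 = vector [0, 0, 0, (-1), 0, 0, 1, 0]"
definition WW5 :: "real^8" where "WW5 = vector [0, (-1), 0, 0, 1, 0, 0, 0]"
definition WW6 :: "real^8" where "WW6 = vector [0, 0, (-1), 1, 0, 0, 0, 0]"
definition WW7 :: "real^8" where "WW7 = vector [(-1), 0, 0, 0, 0, 1, 0, 0]"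
definition WW8 :: "real^8" where "WW8 = vector [0, 0, 1, 1, 0, 0, 0, 0]"
lemmas PQW_defs = PP1_def QQ1_def PP2_def QQ2_def PP3_def QQ3_def PP4_def QQ4_def WW1_def WW2_def WW3_def WW4_def WW5_def WW6_def WW7_def WW8_def
lemma ip_PP1_PP1: "inner PP1 PP1 = 2/9" by (simp add: PP1_def PP1_def inner_vec_def sum_8)
lemma ip_PP1_PP2: "inner PP1 PP2 = 0" by (simp add: PP1_def PP2_def inner_vec_def sum_8)
lemma ip_PP1_PP3: "inner PP1 PP3 = 0" by (simp add: PP1_def PP3_def inner_vec_def sum_8)
lemma ip_PP1_PP4: "inner PP1 PP4 = 0" by (simp add: PP1_def PP4_def inner_vec_def sum_8)
lemma ip_PP1_QQ1: "inner PP1 QQ1 = (-1/9)" by (simp add: PP1_def QQ1_def inner_vec_def sum_8)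
lemma ip_PP1_QQ2: "inner PP1 QQ2 = 0" by (simp add: PP1_def QQ2_def inner_vec_def sum_8)
lemma ip_PP1_QQ3: "inner PP1 QQ3 = 0" by (simp add: PP1_def QQ3_def inner_vec_def sum_8)
lemma ip_PP1_QQ4: "inner PP1 QQ4 = 0" by (simp add: PP1_def QQ4_def inner_vec_def sum_8)
lemma ip_PP2_PP1: "inner PP2 PP1 = 0" by (simp add: PP2_def PP1_def inner_vec_def sum_8)
lemma ip_PP2_PP2: "inner PP2 PP2 = 2/9" by (simp add: PP2_def PP2_def inner_vec_def sum_8)
lemma ip_PP2_PP3: "inner PP2 PP3 = 0" by (simp add: PP2_def PP3_def inner_vec_def sum_8)
lemma ip_PP2_PP4: "inner PP2 PP4 = 0" by (simp add: PP2_def PP4_def inner_vec_def sum_8)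
lemma ip_PP2_QQ1: "inner PP2 QQ1 = 0" by (simp add: PP2_def QQ1_def inner_vec_def sum_8)
lemma ip_PP2_QQ2: "inner PP2 QQ2 = (-1/9)" by (simp add: PP2_def QQ2_def inner_vec_def sum_8)
lemma ip_PP2_QQ3: "inner PP2 QQ3 = 0" by (simp add: PP2_def QQ3_def inner_vec_def sum_8)
lemma ip_PP2_QQ4: "inner PP2 QQ4 = 0" by (simp add: PP2_def QQ4_def inner_vec_def sum_8)
lemma ip_PP3_PP1: "inner PP3 PP1 = 0" by (simp add: PP3_def PP1_def inner_vec_def sum_8)
lemma ip_PP3_PP2: "inner PP3 PP2 = 0" by (simp add: PP3_def PP2_def inner_vec_def sum_8)
lemma ip_PP3_PP3: "inner PP3 PP3 = 2/9" by (simp add: PP3_def PP3_def inner_vec_def sum_8)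
lemma ip_PP3_PP4: "inner PP3 PP4 = 0" by (simp add: PP3_def PP4_def inner_vec_def sum_8)
lemma ip_PP3_QQ1: "inner PP3 QQ1 = 0" by (simp add: PP3_def QQ1_def inner_vec_def sum_8)
lemma ip_PP3_QQ2: "inner PP3 QQ2 = 0" by (simp add: PP3_def QQ2_def inner_vec_def sum_8)
lemma ip_PP3_QQ3: "inner PP3 QQ3 = (-1/9)" by (simp add: PP3_def QQ3_def inner_vec_def sum_8)
lemma ip_PP3_QQ4: "inner PP3 QQ4 = 0" by (simp add: PP3_def QQ4_def inner_vec_def sum_8)
lemma ip_PP4_PP1: "inner PP4 PP1 = 0" by (simp add: PP4_def PP1_def inner_vec_def sum_8)
lemma ip_PP4_PP2: "inner PP4 PP2 = 0" by (simp add: PP4_def PP2_def inner_vec_def sum_8)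
lemma ip_PP4_PP3: "inner PP4 PP3 = 0" by (simp add: PP4_def PP3_def inner_vec_def sum_8)
lemma ip_PP4_PP4: "inner PP4 PP4 = 2/9" by (simp add: PP4_def PP4_def inner_vec_def sum_8)
lemma ip_PP4_QQ1: "inner PP4 QQ1 = 0" by (simp add: PP4_def QQ1_def inner_vec_def sum_8)
lemma ip_PP4_QQ2: "inner PP4 QQ2 = 0" by (simp add: PP4_def QQ2_def inner_vec_def sum_8)
lemma ip_PP4_QQ3: "inner PP4 QQ3 = 0" by (simp add: PP4_def QQ3_def inner_vec_def sum_8)
lemma ip_PP4_QQ4: "inner PP4 QQ4 = (-1/9)" by (simp add: PP4_def QQ4_def inner_vec_def sum_8)
lemma ip_QQ1_PP1: "inner QQ1 PP1 = (-1/9)" by (simp add: QQ1_def PP1_def inner_vec_def sum_8)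
lemma ip_QQ1_PP2: "inner QQ1 PP2 = 0" by (simp add: QQ1_def PP2_def inner_vec_def sum_8)
lemma ip_QQ1_PP3: "inner QQ1 PP3 = 0" by (simp add: QQ1_def PP3_def inner_vec_def sum_8)
lemma ip_QQ1_PP4: "inner QQ1 PP4 = 0" by (simp add: QQ1_def PP4_def inner_vec_def sum_8)
lemma ip_QQ1_QQ1: "inner QQ1 QQ1 = 2/9" by (simp add: QQ1_def QQ1_def inner_vec_def sum_8)
lemma ip_QQ1_QQ2: "inner QQ1 QQ2 = 0" by (simp add: QQ1_def QQ2_def inner_vec_def sum_8)
lemma ip_QQ1_QQ3: "inner QQ1 QQ3 = 0" by (simp add: QQ1_def QQ3_def inner_vec_def sum_8)
lemma ip_QQ1_QQ4: "inner QQ1 QQ4 = 0" by (simp add: QQ1_def QQ4_def inner_vec_def sum_8)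
lemma ip_QQ2_PP1: "inner QQ2 PP1 = 0" by (simp add: QQ2_def PP1_def inner_vec_def sum_8)
lemma ip_QQ2_PP2: "inner QQ2 PP2 = (-1/9)" by (simp add: QQ2_def PP2_def inner_vec_def sum_8)
lemma ip_QQ2_PP3: "inner QQ2 PP3 = 0" by (simp add: QQ2_def PP3_def inner_vec_def sum_8)
lemma ip_QQ2_PP4: "inner QQ2 PP4 = 0" by (simp add: QQ2_def PP4_def inner_vec_def sum_8)
lemma ip_QQ2_QQ1: "inner QQ2 QQ1 = 0" by (simp add: QQ2_def QQ1_def inner_vec_def sum_8)
lemma ip_QQ2_QQ2: "inner QQ2 QQ2 = 2/9" by (simp add: QQ2_def QQ2_def inner_vec_def sum_8)
lemma ip_QQ2_QQ3: "inner QQ2 QQ3 = 0" by (simp add: QQ2_def QQ3_def inner_vec_def sum_8)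
lemma ip_QQ2_QQ4: "inner QQ2 QQ4 = 0" by (simp add: QQ2_def QQ4_def inner_vec_def sum_8)
lemma ip_QQ3_PP1: "inner QQ3 PP1 = 0" by (simp add: QQ3_def PP1_def inner_vec_def sum_8)
lemma ip_QQ3_PP2: "inner QQ3 PP2 = 0" by (simp add: QQ3_def PP2_def inner_vec_def sum_8)
lemma ip_QQ3_PP3: "inner QQ3 PP3 = (-1/9)" by (simp add: QQ3_def PP3_def inner_vec_def sum_8)
lemma ip_QQ3_PP4: "inner QQ3 PP4 = 0" by (simp add: QQ3_def PP4_def inner_vec_def sum_8)
lemma ip_QQ3_QQ1: "inner QQ3 QQ1 = 0" by (simp add: QQ3_def QQ1_def inner_vec_def sum_8)
lemma ip_QQ3_QQ2: "inner QQ3 QQ2 = 0" by (simp add: QQ3_def QQ2_def inner_vec_def sum_8)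
lemma ip_QQ3_QQ3: "inner QQ3 QQ3 = 2/9" by (simp add: QQ3_def QQ3_def inner_vec_def sum_8)
lemma ip_QQ3_QQ4: "inner QQ3 QQ4 = 0" by (simp add: QQ3_def QQ4_def inner_vec_def sum_8)
lemma ip_QQ4_PP1: "inner QQ4 PP1 = 0" by (simp add: QQ4_def PP1_def inner_vec_def sum_8)
lemma ip_QQ4_PP2: "inner QQ4 PP2 = 0" by (simp add: QQ4_def PP2_def inner_vec_def sum_8)
lemma ip_QQ4_PP3: "inner QQ4 PP3 = 0" by (simp add: QQ4_def PP3_def inner_vec_def sum_8)
lemma ip_QQ4_PP4: "inner QQ4 PP4 = (-1/9)" by (simp add: QQ4_def PP4_def inner_vec_def sum_8)
lemma ip_QQ4_QQ1: "inner QQ4 QQ1 = 0" by (simp add: QQ4_def QQ1_def inner_vec_def sum_8)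
lemma ip_QQ4_QQ2: "inner QQ4 QQ2 = 0" by (simp add: QQ4_def QQ2_def inner_vec_def sum_8)
lemma ip_QQ4_QQ3: "inner QQ4 QQ3 = 0" by (simp add: QQ4_def QQ3_def inner_vec_def sum_8)
lemma ip_QQ4_QQ4: "inner QQ4 QQ4 = 2/9" by (simp add: QQ4_def QQ4_def inner_vec_def sum_8)
lemmas ip_all = ip_PP1_PP1 ip_PP1_PP2 ip_PP1_PP3 ip_PP1_PP4 ip_PP1_QQ1 ip_PP1_QQ2 ip_PP1_QQ3 ip_PP1_QQ4 ip_PP2_PP1 ip_PP2_PP2 ip_PP2_PP3 ip_PP2_PP4 ip_PP2_QQ1 ip_PP2_QQ2 ip_PP2_QQ3 ip_PP2_QQ4 ip_PP3_PP1 ip_PP3_PP2 ip_PP3_PP3 ip_PP3_PP4 ip_PP3_QQ1 ip_PP3_QQ2 ip_PP3_QQ3 ip_PP3_QQ4 ip_PP4_PP1 ip_PP4_PP2 ip_PP4_PP3 ip_PP4_PP4 ip_PP4_QQ1 ip_PP4_QQ2 ip_PP4_QQ3 ip_PP4_QQ4 ip_QQ1_PP1 ip_QQ1_PP2 ip_QQ1_PP3 ip_QQ1_PP4 ip_QQ1_QQ1 ip_QQ1_QQ2 ip_QQ1_QQ3 ip_QQ1_QQ4 ip_QQ2_PP1 ip_QQ2_PP2 ip_QQ2_PP3 ip_QQ2_PP4 ip_QQ2_QQ1 ip_QQ2_QQ2 ip_QQ2_QQ3 ip_QQ2_QQ4 ip_QQ3_PP1 ip_QQ3_PP2 ip_QQ3_PP3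 ip_QQ3_PP4 ip_QQ3_QQ1 ip_QQ3_QQ2 ip_QQ3_QQ3 ip_QQ3_QQ4 ip_QQ4_PP1 ip_QQ4_PP2 ip_QQ4_PP3 ip_QQ4_PP4 ip_QQ4_QQ1 ip_QQ4_QQ2 ip_QQ4_QQ3 ip_QQ4_QQ4
lemma WW1_E8: "WW1 \<in> E8" unfolding WW1_def E8_def by (simp add: forall_8 sum_8)
lemma WW2_E8: "WW2 \<in> E8" unfolding WW2_def E8_def by (simp add: forall_8 sum_8)
lemma WW3_E8: "WW3 \<in> E8" unfolding WW3_def E8_def by (simp add: forall_8 sum_8)
lemma WW4_E8: "WW4 \<in> E8" unfolding WW4_def E8_def by (simp add: forall_8 sum_8)
lemma WW5_E8: "WW5 \<in> E8" unfolding WW5_def E8_def by (simp add: forall_8 sum_8)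
lemma WW6_E8: "WW6 \<in> E8" unfolding WW6_def E8_def by (simp add: forall_8 sum_8)
lemma WW7_E8: "WW7 \<in> E8" unfolding WW7_def E8_def by (simp add: forall_8 sum_8)
lemma WW8_E8: "WW8 \<in> E8" unfolding WW8_def E8_def by (simp add: forall_8 sum_8)


definition fE :: "complex^4 \<Rightarrow> real^8" where
  "fE x = cu (x$1) *\<^sub>R PP1 + cv (x$1) *\<^sub>R QQ1 + cu (x$2) *\<^sub>R PP2 + cv (x$2) *\<^sub>R QQ2 +
          cu (x$3) *\<^sub>R PP3 + cv (x$3) *\<^sub>R QQ3 + cu (x$4) *\<^sub>R PP4 + cv (x$4) *\<^sub>R QQ4"

lemma fE_linear: "linear fE"
proof (rule linearI)
  fix x y :: "complex^4" and r :: real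
  show "fE (x + y) = fE x + fE y" unfolding fE_def by (simp add: cu_add cv_add algebra_simps)
  show "fE (r *\<^sub>R x) = r *\<^sub>R fE x" unfolding fE_def by (simp add: cu_scale cv_scale algebra_simps)
qed

lemma inner_c4: "inner (x::complex^4) y = inner (x$1) (y$1) + inner (x$2) (y$2) + inner (x$3) (y$3) + inner (x$4) (y$4)"
  by (simp add: inner_vec_def sum_4)

lemma fE_inner: "inner (fE x) (fE y) = 2/9 * inner x y"
  unfolding fE_def inner_c4 inner_cuv
  apply (simp add: inner_add_left inner_add_right ip_all algebra_simps)
  apply (simp add: field_simps)
  done

lemma fE_comb: "fE ((of_int a1 + of_int b1 * omega) *s (theta *s vector [theta,0,0,0]) +
     (of_int a2 + of_int b2 * omega) *s (theta *s vector [0,theta,0,0]) +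
     (of_int a3 + of_int b3 * omega) *s (theta *s vector [1,1,1,0]) +
     (of_int a4 + of_int b4 * omega) *s (theta *s vector [0,1,-1,1])) =
   of_int a1 *\<^sub>R WW1 + of_int a2 *\<^sub>R WW2 + of_int a3 *\<^sub>R WW3 + of_int a4 *\<^sub>R WW4 +
   of_int b1 *\<^sub>R WW5 + of_int b2 *\<^sub>R WW6 + of_int b3 *\<^sub>R WW7 + of_int b4 *\<^sub>R WW8"
proof -
  have xv: "(of_int a1 + of_int b1 * omega) *s (theta *s vector [theta,0,0,0]) +
     (of_int a2 + of_int b2 * omega) *s (theta *s vector [0,theta,0,0]) +
     (of_int a3 + of_int b3 * omega) *s (theta *s vector [1,1,1,0]) +
     (of_int a4 + of_int b4 * omega) *s (theta *s vector [0,1,-1,1]) = (vector [of_int (- 3 * a1 + a3 - 2 * b3) + of_int (- 3 * b1 + 2 * a3 - b3) * omega, of_int (- 3 * a2 + a3 - 2 * b3 + a4 - 2 * b4) + of_int (- 3 * b2 + 2 * a3 - b3 + 2 * a4 - b4) * omega, of_int (a3 - 2 * b3 - a4 + 2 * b4) + of_int (2 * a3 - b3 - 2 * a4 + b4) * omega, of_int (a4 - 2 * b4) + of_int (2 * a4 - b4) * omega] :: complex^4)"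
    unfolding vec_eq_iff forall_4
    by (simp add: theta_eq algebra_simps omega_sq omega_sq2)
  show ?thesis
    unfolding xv fE_def vector4_nth cuv_eis
    unfolding vec_eq_iff forall_8
    by (simp add: PQW_defs algebra_simps)
qed

lemma E8_add: assumes x: "x \<in> E8" and y: "y \<in> E8" shows "x + y \<in> E8"
proof -
  from x obtain k1 where kx: "(\<Sum>i\<in>UNIV. x$i) = 2 * of_int k1"
    and cx: "(\<forall>i. x$i \<in> \<int>) \<or> (\<forall>i. x$i - 1/2 \<in> \<int>)" by (auto simp: E8_def)
  from y obtain k2 where ky: "(\<Sum>i\<in>UNIV. y$i) = 2 * of_int k2"
    and cy: "(\<forall>i. y$i \<in> \<int>) \<or> (\<forall>i. y$i - 1/2 \<in> \<int>)" by (auto simp: E8_def)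
  have s: "(\<Sum>i\<in>UNIV. (x+y)$i) = 2 * of_int (k1 + k2)" by (simp add: sum.distrib kx ky algebra_simps)
  have "(\<forall>i. (x+y)$i \<in> \<int>) \<or> (\<forall>i. (x+y)$i - 1/2 \<in> \<int>)"
  proof (cases "\<forall>i. x$i \<in> \<int>")
    case xi: True
    show ?thesis
    proof (cases "\<forall>i. y$i \<in> \<int>")
      case True then show ?thesis using xi by (simp add: Ints_add)
    next
      case False
      then have yh: "\<forall>i. y$i - 1/2 \<in> \<int>" using cy by blast
      have "(x+y)$i - 1/2 \<in> \<int>" for i
      proof -
        have "(x+y)$i - 1/2 = x$i + (y$i - 1/2)" by simp
        then show ?thesis using xi yh by (metis Ints_add)
      qed
      then show ?thesis by blast
    qed
  next
    case False
    then have xh: "\<forall>i. x$i - 1/2 \<in> \<int>" using cx by blast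
    show ?thesis
    proof (cases "\<forall>i. y$i \<in> \<int>")
      case yi: True
      have "(x+y)$i - 1/2 \<in> \<int>" for i
      proof -
        have "(x+y)$i - 1/2 = (x$i - 1/2) + y$i" by simp
        then show ?thesis using xh yi by (metis Ints_add)
      qed
      then show ?thesis by blast
    next
      case False
      then have yh: "\<forall>i. y$i - 1/2 \<in> \<int>" using cy by blast
      have "(x+y)$i \<in> \<int>" for i
      proof -
        have "(x+y)$i = ((x$i - 1/2) + (y$i - 1/2)) + 1" by simp
        then show ?thesis using xh yh by (metis Ints_add Ints_1)
      qed
      then show ?thesis by blast
    qed
  qed
  then show ?thesis using s unfolding E8_def by blast
qed

lemma E8_uminus: assumes x: "x \<in> E8" shows "- x \<in> E8"
proof -
  from x obtain k1 where kx: "(\<Sum>i\<in>UNIV. x$i) = 2 * of_int k1"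
    and cx: "(\<forall>i. x$i \<in> \<int>) \<or> (\<forall>i. x$i - 1/2 \<in> \<int>)" by (auto simp: E8_def)
  have s: "(\<Sum>i\<in>UNIV. (- x)$i) = 2 * of_int (- k1)" by (simp add: sum_negf kx)
  have "(\<forall>i. (- x)$i \<in> \<int>) \<or> (\<forall>i. (- x)$i - 1/2 \<in> \<int>)"
  proof (cases "\<forall>i. x$i \<in> \<int>")
    case True then show ?thesis by (simp add: Ints_minus)
  next
    case False
    then have xh: "\<forall>i. x$i - 1/2 \<in> \<int>" using cx by blast
    have "(- x)$i - 1/2 \<in> \<int>" for i
    proof -
      have "(- x)$i - 1/2 = - (x$i - 1/2) - 1" by simp
      then show ?thesis using xh by (metis Ints_minus Ints_diff Ints_1)
    qed
    then show ?thesis by blast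
  qed
  then show ?thesis using s unfolding E8_def by blast
qed

lemma E8_zero: "0 \<in> E8"
  unfolding E8_def by (rule CollectI, rule conjI, simp, rule exI[of _ 0], simp)

lemma E8_nat: "x \<in> E8 \<Longrightarrow> of_nat m *\<^sub>R x \<in> E8"
  by (induct m) (simp_all add: E8_zero E8_add algebra_simps)

lemma E8_int: assumes "x \<in> E8" shows "of_int n *\<^sub>R x \<in> E8"
proof (cases "n \<ge> 0")
  case True
  define m where "m = nat n"
  have "n = int m" using True by (simp add: m_def)
  then show ?thesis using E8_nat[OF assms, of m] by simp
next
  case False
  define m where "m = nat (- n)"
  have "n = - int m" using False by (simp add: m_def)
  then show ?thesis using E8_uminus[OF E8_nat[OF assms, of m]] by simp
qed

lemma img_I: "y = of_int a1 *\<^sub>R WW1 + of_int a2 *\<^sub>R WW2 + of_int a3 *\<^sub>R WW3 + of_int a4 *\<^sub>R WW4 +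
   of_int b1 *\<^sub>R WW5 + of_int b2 *\<^sub>R WW6 + of_int b3 *\<^sub>R WW7 + of_int b4 *\<^sub>R WW8 \<Longrightarrow> y \<in> fE ` espan Gl"
  unfolding Gl_def
  apply (rule image_eqI[OF _ espan4I[OF eis_intro eis_intro eis_intro eis_intro refl]])
  apply (subst fE_comb)
  apply assumption
  done

lemma fE_image: "fE ` espan Gl = E8"
proof
  show "fE ` espan Gl \<subseteq> E8"
  proof
    fix y assume "y \<in> fE ` espan Gl"
    then obtain x where x: "x \<in> espan Gl" and yx: "y = fE x" by blast
    from x obtain d1 d2 d3 d4 where D: "d1 \<in> eisenstein" "d2 \<in> eisenstein" "d3 \<in> eisenstein" "d4 \<in> eisenstein"
      and xd: "x = d1 *s (theta *s vector [theta,0,0,0]) + d2 *s (theta *s vector [0,theta,0,0]) +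
         d3 *s (theta *s vector [1,1,1,0]) + d4 *s (theta *s vector [0,1,-1,1])"
      unfolding Gl_def espan4 by blast
    obtain a1 b1 where 1: "d1 = of_int a1 + of_int b1 * omega" using D(1) by (rule eisE)
    obtain a2 b2 where 2: "d2 = of_int a2 + of_int b2 * omega" using D(2) by (rule eisE)
    obtain a3 b3 where 3: "d3 = of_int a3 + of_int b3 * omega" using D(3) by (rule eisE)
    obtain a4 b4 where 4: "d4 = of_int a4 + of_int b4 * omega" using D(4) by (rule eisE)
    have "y = of_int a1 *\<^sub>R WW1 + of_int a2 *\<^sub>R WW2 + of_int a3 *\<^sub>R WW3 + of_int a4 *\<^sub>R WW4 +
      of_int b1 *\<^sub>R WW5 + of_int b2 *\<^sub>R WW6 + of_int b3 *\<^sub>R WW7 + of_int b4 *\<^sub>R WW8"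
      unfolding yx xd 1 2 3 4 by (rule fE_comb)
    then show "y \<in> E8"
      by (simp add: E8_add E8_int WW1_E8 WW2_E8 WW3_E8 WW4_E8 WW5_E8 WW6_E8 WW7_E8 WW8_E8)
  qed
next
  show "E8 \<subseteq> fE ` espan Gl"
  proof
    fix y assume y: "y \<in> E8"
    then obtain k where k: "(\<Sum>i\<in>UNIV. y$i) = 2 * of_int k"
      and cy: "(\<forall>i. y$i \<in> \<int>) \<or> (\<forall>i. y$i - 1/2 \<in> \<int>)" by (auto simp: E8_def)
    show "y \<in> fE ` espan Gl"
    proof (cases "\<forall>i. y$i \<in> \<int>")
      case True
      then have "\<forall>i. \<exists>z::int. y$i = of_int z" by (metis Ints_cases)
      then obtain z where z: "\<forall>i. y$i = of_int (z i)" by (rule choice[THEN exE])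
      have sumeq: "of_int (z 1) + of_int (z 2) + of_int (z 3) + of_int (z 4) + of_int (z 5) + of_int (z 6) + of_int (z 7) + of_int (z 8) = 2 * (of_int k :: real)"
        using k by (simp add: sum_8 z)
      show ?thesis
        apply (rule img_I[of y "z 2 + z 5" "z 1 + z 2 + z 5 + z 6" "2 * z 8" "z 7 + z 8"
                  "z 5 + z 8" "k - z 3 + z 8" "- z 1 - z 2 - z 5 + z 8" "k - z 1 - z 2 - z 5 - z 6"])
        unfolding vec_eq_iff forall_8
        by (intro conjI; simp add: PQW_defs z algebra_simps; insert sumeq; linarith)
    next
      case False
      then have "\<forall>i. y$i - 1/2 \<in> \<int>" using cy by blast
      then have "\<forall>i. \<exists>z::int. y$i - 1/2 = of_int z" by (metis Ints_cases)
      then obtain z where z0: "\<forall>i. y$i - 1/2 = of_int (z i)" by (rule choice[THEN exE])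
      then have z: "\<forall>i. y$i = of_int (z i) + 1/2" by (metis diff_add_cancel)
      have sumeq: "of_int (z 1) + of_int (z 2) + of_int (z 3) + of_int (z 4) + of_int (z 5) + of_int (z 6) + of_int (z 7) + of_int (z 8) + 4 = 2 * (of_int k :: real)"
        using k by (simp add: sum_8 z)
      show ?thesis
        apply (rule img_I[of y "z 2 + z 5 + 1" "z 1 + z 2 + z 5 + z 6 + 2" "2 * z 8 + 1" "z 7 + z 8 + 1"
                  "z 5 + z 8 + 1" "k - z 3 + z 8" "- z 1 - z 2 - z 5 + z 8 - 1" "k - z 1 - z 2 - z 5 - z 6 - 2"])
        unfolding vec_eq_iff forall_8
        by (intro conjI; simp add: PQW_defs z algebra_simps; insert sumeq; linarith)
    qed
  qed
qed


lemma Gsub: assumes "k \<in> {1..10::nat}" shows "espan Gl \<subseteq> Lam k"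
proof -
  have "k = 1 \<or> k = 2 \<or> k = 3 \<or> k = 4 \<or> k = 5 \<or> k = 6 \<or> k = 7 \<or> k = 8 \<or> k = 9 \<or> k = 10"
    using assms unfolding atLeastAtMost_iff by presburger
  then have "\<forall>v\<in>set Gl. v \<in> Lam k"
    using memall_1 memall_2 memall_3 memall_4 memall_5 memall_6 memall_7 memall_8 memall_9 memall_10
    by blast
  then show ?thesis unfolding Lam_def by (rule espan_subset)
qed

lemma eq2: "Lam 1 \<inter> Lam 2 = espan Gl"
  using inter_sub Gsub[of 1] Gsub[of 2] by auto

theorem mainTheorem5:
  shows "(\<Inter>k\<in>{1..10::nat}. Lam k) = Lam 1 \<inter> Lam 2 \<and>
         Lam 1 \<inter> Lam 2 = espan [theta *s vector [theta,0,0,0], theta *s vector [0,theta,0,0],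
                                  theta *s vector [1,1,1,0], theta *s vector [0,1,-1,1]] \<and>
         is_E8_copy (Lam 1 \<inter> Lam 2)"
proof (intro conjI)
  show "(\<Inter>k\<in>{1..10::nat}. Lam k) = Lam 1 \<inter> Lam 2"
  proof
    show "(\<Inter>k\<in>{1..10::nat}. Lam k) \<subseteq> Lam 1 \<inter> Lam 2" by auto
    show "Lam 1 \<inter> Lam 2 \<subseteq> (\<Inter>k\<in>{1..10::nat}. Lam k)"
      unfolding eq2 using Gsub by blast
  qed
  show "Lam 1 \<inter> Lam 2 = espan [theta *s vector [theta,0,0,0], theta *s vector [0,theta,0,0],
                                  theta *s vector [1,1,1,0], theta *s vector [0,1,-1,1]]"
    using eq2 unfolding Gl_def .
  show "is_E8_copy (Lam 1 \<inter> Lam 2)"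
    unfolding is_E8_copy_def eq2
    by (rule exI[of _ fE], rule exI[of _ "2/9"]) (simp add: fE_linear fE_inner fE_image)
qed

end
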